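(* Let $\pi\in\mathcal C_n(321)$ and $w=\hat\pi$. Then $$\#\{(i,k): i+2\le k\le n,\ \hat\pi_k<\hat\pi_i<\hat\pi_{i+1}<\pi(\hat\pi_k)\}=N_{\underline{23}\,\underline{14}}(w)+N_{\underline{23}\,\underline{1}}(w).$$
   Context: Permutations of $[n]$ are written in one-line notation $\pi=\pi_1\cdots\pi_n$. A permutation contains $321$ if there are $i<j<k$ with $\pi_i>\pi_j>\pi_k$. $\mathcal C_n$ is the set of cyclic permutations of $[n]$ (a single $n$-cycle), and $\mathcal C_n(321)$ those avoiding $321$. The standard cycle notation of $\pi$ writes each cycle with its largest element first, as $(m,\pi(m),\pi^2(m),\dots)$, and lists the cycles in increasing order of their largest elements. $\theta:S_n\to S_n$ sends $\pi$ to the permutation whose one-line notation is the standard cycle notation of $\pi$ with parentheses erased; $\hat\pi=\theta(\pi)$. For a sequence $w=w_1\cdots w_N$ of distinct integers: $N_{\underline{23}\,\underline{14}}(w)=\#\{(i,j): i+2\le j\le N-1,\ w_j<w_i<w_{i+1}<w_{j+1}\}$; $N_{\underline{23}\,\underline{1}}(w)=\#\{i: i+1\le N-1,\ w_N<w_i<w_{i+1}\}$ (the "1" is the last entry of $w$). *)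

theory Defs
  imports "HOL-Combinatorics.Permutations"
begin

definition cyclic_perm :: "nat \<Rightarrow> (nat \<Rightarrow> nat) \<Rightarrow> bool" where
  "cyclic_perm n \<pi> \<longleftrightarrow> \<pi> permutes {1..n} \<and> n \<ge> 1 \<and>
     (\<forall>x\<in>{1..n}. {(\<pi> ^^ k) x | k. True} = {1..n})"

definition avoids321 :: "nat \<Rightarrow> (nat \<Rightarrow> nat) \<Rightarrow> bool" where
  "avoids321 n \<pi> \<longleftrightarrow>
     \<not> (\<exists>i j k. 1 \<le> i \<and> i < j \<and> j < k \<and> k \<le> n \<and> \<pi> i > \<pi> j \<and> \<pi> j > \<pi> k)"

definition cyc_len :: "(nat \<Rightarrow> nat) \<Rightarrow> nat \<Rightarrow> nat" where
  "cyc_len \<pi> m = (LEAST k. 0 < k \<and> (\<pi> ^^ k) m = m)"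

definition cyc_leaders :: "nat \<Rightarrow> (nat \<Rightarrow> nat) \<Rightarrow> nat set" where
  "cyc_leaders n \<pi> = {m \<in> {1..n}. \<forall>k. (\<pi> ^^ k) m \<le> m}"

text \<open>theta: standard cycle notation with parentheses erased, as a list
  (entry i of the one-line notation is the list element at index i-1).\<close>
definition theta :: "nat \<Rightarrow> (nat \<Rightarrow> nat) \<Rightarrow> nat list" where
  "theta n \<pi> = concat (map (\<lambda>m. map (\<lambda>k. (\<pi> ^^ k) m) [0..<cyc_len \<pi> m])
                            (sorted_list_of_set (cyc_leaders n \<pi>)))"

definition at1 :: "nat list \<Rightarrow> nat \<Rightarrow> nat" where
  "at1 w i = w ! (i - 1)"

definition N2314 :: "nat list \<Rightarrow> nat" where
  "N2314 w = card {(i, j). 1 \<le> i \<and> i + 2 \<le> j \<and> j + 1 \<le> length w \<and>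
      at1 w j < at1 w i \<and> at1 w i < at1 w (i + 1) \<and> at1 w (i + 1) < at1 w (j + 1)}"

definition N231 :: "nat list \<Rightarrow> nat" where
  "N231 w = card {i. 1 \<le> i \<and> i + 2 \<le> length w \<and>
      at1 w (length w) < at1 w i \<and> at1 w i < at1 w (i + 1)}"

end

theory Submission
  imports Defs
begin

lemma funpow_period:
  assumes "(f ^^ k) x = x" shows "(f ^^ (k * q)) x = x"
proof (induction q)
  case 0 then show ?case by simp
next
  case (Suc q)
  have "(f ^^ (k * Suc q)) x = (f ^^ (k * q)) ((f ^^ k) x)"
    by (metis funpow_add comp_apply mult_Suc_right add.commute)
  then show ?case using Suc assms by simp
qed

lemma funpow_mod:
  assumes "(f ^^ k) x = x" shows "(f ^^ j) x = (f ^^ (j mod k)) x"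
proof -
  have "j = j mod k + k * (j div k)" by simp
  then have "(f ^^ j) x = (f ^^ (j mod k)) ((f ^^ (k * (j div k))) x)"
    by (metis funpow_add comp_apply)
  then show ?thesis using funpow_period[OF assms] by simp
qed

lemma inrange:
  assumes "\<pi> permutes {1..n}" "x \<in> {1..(n::nat)}" shows "(\<pi> ^^ k) x \<in> {1..n}"
proof (induction k)
  case 0 then show ?case using assms by simp
next
  case (Suc k) then show ?case using permutes_in_image[OF assms(1)] by simp
qed

lemma noret:
  assumes c: "cyclic_perm n \<pi>" and k: "0 < k" "k < n"
  shows "(\<pi> ^^ k) n \<noteq> n"
proof
  assume h: "(\<pi> ^^ k) n = n"
  have n1: "n \<ge> 1" using c by (simp add: cyclic_perm_def)
  have "{(\<pi> ^^ j) n | j. True} = {1..n}" using c n1 by (simp add: cyclic_perm_def)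
  moreover have "{(\<pi> ^^ j) n | j. True} \<subseteq> (\<lambda>j. (\<pi> ^^ j) n) ` {..<k}"
  proof
    fix y assume "y \<in> {(\<pi> ^^ j) n | j. True}"
    then obtain j where "y = (\<pi> ^^ j) n" by auto
    then have "y = (\<pi> ^^ (j mod k)) n" using funpow_mod[OF h] by simp
    moreover have "j mod k < k" using k by simp
    ultimately show "y \<in> (\<lambda>j. (\<pi> ^^ j) n) ` {..<k}" by auto
  qed
  ultimately have "card {1..n} \<le> card ((\<lambda>j. (\<pi> ^^ j) n) ` {..<k})"
    by (metis card_mono finite_imageI finite_lessThan)
  also have "\<dots> \<le> k" using card_image_le[of "{..<k}"] by simp
  finally show False using k by simp
qed

lemma ret:
  assumes c: "cyclic_perm n \<pi>"
  shows "(\<pi> ^^ n) n = n"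
proof -
  have p: "\<pi> permutes {1..n}" and n1: "n \<ge> 1" using c by (auto simp: cyclic_perm_def)
  have "(\<lambda>j. (\<pi> ^^ j) n) ` {0..n} \<subseteq> {1..n}" using inrange[OF p] n1 by auto
  have "\<not> inj_on (\<lambda>j. (\<pi> ^^ j) n) {0..n}"
  proof
    assume "inj_on (\<lambda>j. (\<pi> ^^ j) n) {0..n}"
    then have "card {0..n} \<le> card {1..n}"
      using card_inj_on_le[of _ "{0..n}" "{1..n}"] \<open>_ \<subseteq> {1..n}\<close> by auto
    then show False by simp
  qed
  then obtain a b where ab: "a \<le> n" "b \<le> n" "a < b" "(\<pi> ^^ a) n = (\<pi> ^^ b) n"
    unfolding inj_on_def by (metis atLeastAtMost_iff linorder_neqE_nat)
  have "(\<pi> ^^ b) n = (\<pi> ^^ a) ((\<pi> ^^ (b - a)) n)"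
    using ab by (metis funpow_add comp_apply le_add_diff_inverse less_imp_le)
  moreover have "inj (\<pi> ^^ a)" using permutes_bij[OF p] bij_is_inj inj_fn by blast
  ultimately have e: "(\<pi> ^^ (b - a)) n = n" using ab(4) by (metis injD)
  have "b - a = n" using noret[OF c, of "b - a"] e ab by force
  then show ?thesis using e by simp
qed

lemma theta_eq:
  assumes c: "cyclic_perm n \<pi>"
  shows "theta n \<pi> = map (\<lambda>k. (\<pi> ^^ k) n) [0..<n]"
proof -
  have p: "\<pi> permutes {1..n}" and n1: "n \<ge> 1" using c by (auto simp: cyclic_perm_def)
  have orb: "\<And>x. x \<in> {1..n} \<Longrightarrow> {(\<pi> ^^ k) x | k. True} = {1..n}"
    using c by (auto simp: cyclic_perm_def)
  have L: "cyc_leaders n \<pi> = {n}"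
  proof
    show "cyc_leaders n \<pi> \<subseteq> {n}"
    proof
      fix m assume m: "m \<in> cyc_leaders n \<pi>"
      then have m1: "m \<in> {1..n}" and le: "\<forall>k. (\<pi> ^^ k) m \<le> m" by (auto simp: cyc_leaders_def)
      have "n \<in> {(\<pi> ^^ k) m | k. True}" using orb[OF m1] n1 by auto
      then have "n \<le> m" using le by auto
      then show "m \<in> {n}" using m1 by auto
    qed
    show "{n} \<subseteq> cyc_leaders n \<pi>"
      using inrange[OF p, of n] n1 by (auto simp: cyc_leaders_def)
  qed
  have CL: "cyc_len \<pi> n = n"
    unfolding cyc_len_def
  proof (rule Least_equality)
    show "0 < n \<and> (\<pi> ^^ n) n = n" using n1 ret[OF c] by simp
    show "\<And>y. 0 < y \<and> (\<pi> ^^ y) n = n \<Longrightarrow> n \<le> y"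
      using noret[OF c] by (meson not_le)
  qed
  have "sorted_list_of_set {n} = [n]" by simp
  then show ?thesis unfolding theta_def L using CL by simp
qed

theorem mainTheorem5:
  fixes n :: nat and \<pi> :: "nat \<Rightarrow> nat"
  assumes "cyclic_perm n \<pi>" and "avoids321 n \<pi>"
  defines "w \<equiv> theta n \<pi>"
  shows "card {(i, k). 1 \<le> i \<and> i + 2 \<le> k \<and> k \<le> n \<and>
             at1 w k < at1 w i \<and> at1 w i < at1 w (i + 1) \<and> at1 w (i + 1) < \<pi> (at1 w k)}
         = N2314 w + N231 w"
proof -
  note c = assms(1)
  have p: "\<pi> permutes {1..n}" and n1: "n \<ge> 1" using c by (auto simp: cyclic_perm_def)
  have wdef: "w = map (\<lambda>k. (\<pi> ^^ k) n) [0..<n]" using theta_eq[OF c] w_def by simp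
  have len: "length w = n" using wdef by simp
  have at: "\<And>k. 1 \<le> k \<Longrightarrow> k \<le> n \<Longrightarrow> at1 w k = (\<pi> ^^ (k - 1)) n"
  proof -
    fix k :: nat assume "1 \<le> k" "k \<le> n"
    then have "k - 1 < n" by simp
    then show "at1 w k = (\<pi> ^^ (k - 1)) n" unfolding wdef at1_def by simp
  qed
  have succ: "\<And>k. 1 \<le> k \<Longrightarrow> k < n \<Longrightarrow> \<pi> (at1 w k) = at1 w (k + 1)"
  proof -
    fix k :: nat assume k: "1 \<le> k" "k < n"
    have "at1 w (k + 1) = (\<pi> ^^ Suc (k - 1)) n" using at[of "k+1"] k by simp
    also have "\<dots> = \<pi> ((\<pi> ^^ (k - 1)) n)" by (simp only: funpow.simps o_apply)
    also have "\<dots> = \<pi> (at1 w k)" using at[of k] k by simp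
    finally show "\<pi> (at1 w k) = at1 w (k + 1)" by simp
  qed
  have last: "\<pi> (at1 w n) = n"
  proof -
    have "\<pi> (at1 w n) = \<pi> ((\<pi> ^^ (n - 1)) n)" using at[of n] n1 by simp
    also have "\<dots> = (\<pi> ^^ Suc (n - 1)) n" by (simp only: funpow.simps o_apply)
    finally have "\<pi> (at1 w n) = (\<pi> ^^ Suc (n - 1)) n" .
    then show ?thesis using ret[OF c] n1 by simp
  qed
  have small: "\<And>i. 1 \<le> i \<Longrightarrow> i + 2 \<le> n \<Longrightarrow> at1 w (i + 1) < n"
  proof -
    fix i assume i: "1 \<le> i" "i + 2 \<le> n"
    have "at1 w (i + 1) = (\<pi> ^^ i) n" using at[of "i+1"] i by simp
    moreover have "(\<pi> ^^ i) n \<noteq> n" using noret[OF c, of i] i by simp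
    moreover have "(\<pi> ^^ i) n \<in> {1..n}" using inrange[OF p, of n] n1 by simp
    ultimately show "at1 w (i + 1) < n" by simp
  qed
  define S where "S = {(i, k). 1 \<le> i \<and> i + 2 \<le> k \<and> k \<le> n \<and>
             at1 w k < at1 w i \<and> at1 w i < at1 w (i + 1) \<and> at1 w (i + 1) < \<pi> (at1 w k)}"
  define A where "A = {(i, j). 1 \<le> i \<and> i + 2 \<le> j \<and> j + 1 \<le> length w \<and>
      at1 w j < at1 w i \<and> at1 w i < at1 w (i + 1) \<and> at1 w (i + 1) < at1 w (j + 1)}"
  define B where "B = {i. 1 \<le> i \<and> i + 2 \<le> length w \<and>
      at1 w (length w) < at1 w i \<and> at1 w i < at1 w (i + 1)}"
  have SA: "S = A \<union> (\<lambda>i. (i, n)) ` B"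
  proof (rule set_eqI, clarify)
    fix i k
    show "((i, k) \<in> S) = ((i, k) \<in> A \<union> (\<lambda>i. (i, n)) ` B)"
    proof (cases "k = n")
      case True
      have "(i, k) \<notin> A" unfolding A_def len using True by simp
      moreover have "((i, k) \<in> (\<lambda>i. (i, n)) ` B) = (i \<in> B)" using True by auto
      moreover have "((i, k) \<in> S) = (i \<in> B)"
        unfolding S_def B_def len using True last small by auto
      ultimately show ?thesis by simp
    next
      case False
      have "(i, k) \<notin> (\<lambda>i. (i, n)) ` B" using False by auto
      moreover have "((i, k) \<in> S) = ((i, k) \<in> A)"
      proof (cases "k < n")
        case True
        then show ?thesis unfolding S_def A_def len using succ[of k] by auto
      next
        case False
        then show ?thesis unfolding S_def A_def len using \<open>k \<noteq> n\<close> by auto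
      qed
      ultimately show ?thesis by simp
    qed
  qed
  have fA: "finite A" unfolding A_def
    by (rule finite_subset[of _ "{0..length w} \<times> {0..length w}"]) auto
  have fB: "finite B" unfolding B_def by (rule finite_subset[of _ "{0..length w}"]) auto
  have disj: "A \<inter> (\<lambda>i. (i, n)) ` B = {}" unfolding A_def len by auto
  have "card S = card A + card ((\<lambda>i. (i, n)) ` B)"
    unfolding SA using card_Un_disjoint[OF fA finite_imageI[OF fB] disj] .
  also have "card ((\<lambda>i. (i, n)) ` B) = card B" by (rule card_image) (auto simp: inj_on_def)
  finally show ?thesis unfolding S_def N2314_def N231_def A_def B_def .
qed

end
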